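(* For any filtration $\mathcal{F}_{t-1}$, conditioned on the event $E^f(t)$, we have for all $x\in\mathcal{Q}$ $$\mathbb{P}\left(f_t(x)>\rho_mf(x)\mid\mathcal{F}_{t-1}\right)\ge p,\qquad p=\frac{1}{4e\sqrt{\pi}},$$ where $f_t$ is sampled from $\mathcal{GP}(\mu_{t-1}(\cdot),\nu_t^2\sigma^2_{t-1}(\cdot))$ given $\mathcal{F}_{t-1}$.
   Context: Setting. Let $\mathcal{Q}\subset\mathbb{R}^n$ be finite, $k$ a positive semidefinite kernel on $\mathcal{Q}$ with $k\le1$, and $f$ in the RKHS of $k$ with $\|f\|_k\le\mathcal{B}_f$. Queries $x_1,x_2,\ldots\in\mathcal{Q}$ are selected sequentially; feedback $y_t=f(x_t)+\epsilon_t$ with $R$-sub-Gaussian $\epsilon_t$ and $|y_t|\le\mathcal{B}_y$, observed after a random delay $d_t\in\{0,1,\ldots\}$ drawn from a distribution $\mathcal{D}$. For an integer $m\ge1$, $\rho_m=\mathbb{P}(d_s\le m)$, censored feedback $\tilde y_{s,t}=y_s\mathbb{1}\{d_s\le\min(m,t-s)\}$. With $\lambda>0$: $\mu_{t-1}(x)=\mathbf{k}_{t-1}(x)^\top(\mathbf{K}_{t-1}+\lambda I)^{-1}\tilde{\mathbf{y}}_{t-1}$, $\sigma^2_{t-1}(x,x')=k(x,x')-\mathbf{k}_{t-1}(x)^\top(\mathbf{K}_{t-1}+\lambda I)^{-1}\mathbf{k}_{t-1}(x')$, $\sigma^2_{t-1}(x)=\sigma^2_{t-1}(x,x)$, $\mathbf{k}_{t-1}(x)=(k(x,x_i))_{i\le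 t-1}$, $\mathbf{K}_{t-1}=(k(x_i,x_j))_{i,j\le t-1}$, $\tilde{\mathbf{y}}_{t-1}=(\tilde y_{s,t})_{s\le t-1}$. $\gamma_t=\max_A\frac12\log\det(I+\lambda^{-1}\mathbf{K}_A)$ over collections $A$ of $t$ points. For $\delta\in(0,1)$: $\beta_t=\mathcal{B}_f+(R+\mathcal{B}_y)\sqrt{2(\gamma_{t-1}+1+\log(4/\delta))}$, $\nu_t=\mathcal{B}_y\sum_{s=t-m}^{t-1}\sigma_{t-1}(x_s)+\beta_t$ (terms with $s<1$ omitted). $\mathcal{F}_{t-1}$ is the history of inputs and observations up to iteration $t-1$. $E^f(t)$ is the event that $|\mu_{t-1}(x)-\rho_mf(x)|\le\nu_t\sigma_{t-1}(x)$ for all $x\in\mathcal{Q}$. *)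

theory Defs
  imports "HOL-Probability.Probability"
          "Jordan_Normal_Form.Gauss_Jordan_Elimination"
          "Jordan_Normal_Form.Determinant"
begin

definition hist :: "(nat \<Rightarrow> 'a) \<Rightarrow> nat \<Rightarrow> 'a list" where
  "hist xs t = map xs [1..<t]"

definition gram :: "('a \<Rightarrow> 'a \<Rightarrow> real) \<Rightarrow> 'a list \<Rightarrow> real mat" where
  "gram k A = mat (length A) (length A) (\<lambda>(i,j). k (A!i) (A!j))"

definition kvec :: "('a \<Rightarrow> 'a \<Rightarrow> real) \<Rightarrow> 'a list \<Rightarrow> 'a \<Rightarrow> real vec" where
  "kvec k A x = vec (length A) (\<lambda>i. k x (A!i))"

definition reg_inv :: "('a \<Rightarrow> 'a \<Rightarrow> real) \<Rightarrow> real \<Rightarrow> 'a list \<Rightarrow> real mat" where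
  "reg_inv k lam A = the (mat_inverse (gram k A + lam \<cdot>\<^sub>m 1\<^sub>m (length A)))"

definition post_mean :: "('a \<Rightarrow> 'a \<Rightarrow> real) \<Rightarrow> real \<Rightarrow> 'a list \<Rightarrow> real vec \<Rightarrow> 'a \<Rightarrow> real" where
  "post_mean k lam A yv x = kvec k A x \<bullet> (reg_inv k lam A *\<^sub>v yv)"

definition post_cov :: "('a \<Rightarrow> 'a \<Rightarrow> real) \<Rightarrow> real \<Rightarrow> 'a list \<Rightarrow> 'a \<Rightarrow> 'a \<Rightarrow> real" where
  "post_cov k lam A x x' = k x x' - kvec k A x \<bullet> (reg_inv k lam A *\<^sub>v kvec k A x')"

definition post_sd :: "('a \<Rightarrow> 'a \<Rightarrow> real) \<Rightarrow> real \<Rightarrow> 'a list \<Rightarrow> 'a \<Rightarrow> real" where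
  "post_sd k lam A x = sqrt (post_cov k lam A x x)"

definition ytil :: "(nat \<Rightarrow> real) \<Rightarrow> (nat \<Rightarrow> nat) \<Rightarrow> nat \<Rightarrow> nat \<Rightarrow> real vec" where
  "ytil y d m t = vec (t - 1) (\<lambda>i. let s = i + 1 in if d s \<le> min m (t - s) then y s else 0)"

definition max_info_gain :: "('a \<Rightarrow> 'a \<Rightarrow> real) \<Rightarrow> real \<Rightarrow> 'a set \<Rightarrow> nat \<Rightarrow> real" where
  "max_info_gain k lam Q n =
     Max {1/2 * ln (det (1\<^sub>m n + (1 / lam) \<cdot>\<^sub>m gram k A)) | A. set A \<subseteq> Q \<and> length A = n}"

definition beta_t :: "('a \<Rightarrow> 'a \<Rightarrow> real) \<Rightarrow> real \<Rightarrow> 'a set \<Rightarrow> real \<Rightarrow> real \<Rightarrow> real \<Rightarrow> real \<Rightarrow> nat \<Rightarrow> real" where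
  "beta_t k lam Q Bf R By \<delta> t =
     Bf + (R + By) * sqrt (2 * (max_info_gain k lam Q (t - 1) + 1 + ln (4 / \<delta>)))"

definition nu_t :: "('a \<Rightarrow> 'a \<Rightarrow> real) \<Rightarrow> real \<Rightarrow> 'a set \<Rightarrow> real \<Rightarrow> real \<Rightarrow> real \<Rightarrow> real
                    \<Rightarrow> nat \<Rightarrow> (nat \<Rightarrow> 'a) \<Rightarrow> nat \<Rightarrow> real" where
  "nu_t k lam Q Bf R By \<delta> m xs t =
     By * (\<Sum>s\<in>{s\<in>{1..<t}. t \<le> s + m}. post_sd k lam (hist xs t) (xs s))
     + beta_t k lam Q Bf R By \<delta> t"

end

theory Submission
  imports Defs "HOL-Analysis.Analysis"
begin

lemma const_bound: "1 / (4 * exp 1 * sqrt pi) \<le> exp (-2) / sqrt (2 * pi)"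
proof -
  have e: "exp 1 < (272/100::real)" by (rule e_less_272)
  have s2: "sqrt 2 < (1415/1000::real)"
    by (rule real_less_lsqrt) (auto simp: power2_eq_square)
  have e0: "exp (1::real) > 0" by simp
  have "exp 1 * sqrt 2 \<le> (4::real)"
  proof -
    have "exp 1 * sqrt 2 \<le> (272/100) * (1415/1000::real)"
      using e s2 e0 by (intro mult_mono) auto
    then show ?thesis by simp
  qed
  have ex2: "exp (-2::real) = 1 / (exp 1 * exp 1)"
    by (simp add: exp_minus exp_add[symmetric] field_simps)
  have sp: "sqrt (2 * pi) = sqrt 2 * sqrt pi" by (simp add: real_sqrt_mult)
  have pp: "sqrt pi > 0" by simp
  have "1 / (4 * exp 1 * sqrt pi) \<le> 1 / (exp 1 * exp 1 * (sqrt 2 * sqrt pi))"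
  proof (rule divide_left_mono)
    have "exp 1 * (exp 1 * sqrt 2) * sqrt pi \<le> exp 1 * 4 * sqrt pi"
      using \<open>exp 1 * sqrt 2 \<le> 4\<close> e0 pp by (intro mult_right_mono mult_left_mono) auto
    then show "exp 1 * exp 1 * (sqrt 2 * sqrt pi) \<le> 4 * exp 1 * sqrt pi"
      by (simp add: algebra_simps)
  qed (use e0 pp in auto)
  also have "\<dots> = exp (-2) / sqrt (2 * pi)" using ex2 sp by simp
  finally show ?thesis .
qed

lemma normal_tail:
  fixes X :: "'w \<Rightarrow> real"
  assumes P: "prob_space M" and s: "s > 0" and a: "\<bar>mu - a\<bar> \<le> s"
    and D: "distributed M lborel X (normal_density mu s)"
  shows "measure M {\<omega>\<in>space M. X \<omega> > a} \<ge> 1 / (4 * exp 1 * sqrt pi)"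
proof -
  interpret prob_space M by (rule P)
  define I where "I = {mu + s <.. mu + 2 * s}"
  define c where "c = exp (-2) / (s * sqrt (2 * pi))"
  have c0: "c \<ge> 0" unfolding c_def using s by simp
  have set_eq: "{\<omega>\<in>space M. X \<omega> > a} = X -` {a<..} \<inter> space M" by auto
  have em: "emeasure M {\<omega>\<in>space M. X \<omega> > a} = (\<integral>\<^sup>+x. ennreal (normal_density mu s x) * indicator {a<..} x \<partial>lborel)"
    unfolding set_eq by (rule distributed_emeasure[OF D]) simp
  have pw: "ennreal c * indicator I x \<le> ennreal (normal_density mu s x) * indicator {a<..} x" for x
  proof (cases "x \<in> I")
    case True
    then have x1: "mu + s < x" "x \<le> mu + 2 * s" unfolding I_def by auto
    then have xa: "x \<in> {a<..}" using a by auto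
    have sq: "(x - mu)\<^sup>2 \<le> (2 * s)\<^sup>2" using x1 s by (intro power_mono) auto
    have "-(x - mu)\<^sup>2 / (2 * s\<^sup>2) \<ge> -2"
      using sq s by (simp add: field_simps power2_eq_square)
    then have ex: "exp (-(x - mu)\<^sup>2 / (2 * s\<^sup>2)) \<ge> exp (-2)" by simp
    have sq2: "sqrt (2 * pi * s\<^sup>2) = s * sqrt (2 * pi)"
      using s by (simp add: real_sqrt_mult)
    have "c \<le> normal_density mu s x"
      unfolding normal_density_def c_def sq2 using ex s
      by (simp add: divide_right_mono)
    then show ?thesis using True xa by (simp add: ennreal_leI)
  qed (simp)
  have "ennreal (c * s) = (\<integral>\<^sup>+x. ennreal c * indicator I x \<partial>lborel)"
    using s c0 by (simp add: nn_integral_cmult_indicator I_def ennreal_mult)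
  also have "\<dots> \<le> (\<integral>\<^sup>+x. ennreal (normal_density mu s x) * indicator {a<..} x \<partial>lborel)"
    by (rule nn_integral_mono) (rule pw)
  also have "\<dots> = ennreal (prob {\<omega>\<in>space M. X \<omega> > a})"
    using em emeasure_eq_measure by simp
  finally have "c * s \<le> prob {\<omega>\<in>space M. X \<omega> > a}"
    by (simp add: ennreal_le_iff)
  moreover have "c * s = exp (-2) / sqrt (2 * pi)" unfolding c_def using s by simp
  ultimately show ?thesis using const_bound by linarith
qed

theorem lemma3:
  fixes Q :: "'a set" and k :: "'a \<Rightarrow> 'a \<Rightarrow> real" and f :: "'a \<Rightarrow> real"
    and xs :: "nat \<Rightarrow> 'a" and y :: "nat \<Rightarrow> real" and d :: "nat \<Rightarrow> nat"
    and D :: "nat pmf" and m t :: nat and lam \<delta> R Bf By :: real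
    and M :: "'w measure" and ft :: "'w \<Rightarrow> 'a \<Rightarrow> real"
  defines "\<rho> \<equiv> measure_pmf.prob D {..m}"
  defines "\<mu> \<equiv> post_mean k lam (hist xs t) (ytil y d m t)"
  defines "\<sigma> \<equiv> post_sd k lam (hist xs t)"
  defines "\<nu> \<equiv> nu_t k lam Q Bf R By \<delta> m xs t"
  assumes "finite Q" and "Q \<noteq> {}"
    and "\<forall>x\<in>Q. \<forall>x'\<in>Q. k x x' = k x' x"
    and "\<forall>A c. set A \<subseteq> Q \<longrightarrow> (\<Sum>i<length A. \<Sum>j<length A. c i * c j * k (A!i) (A!j)) \<ge> 0"
    and "\<forall>x\<in>Q. \<forall>x'\<in>Q. k x x' \<le> 1"
    and "\<forall>s. xs s \<in> Q" and "\<forall>s. \<bar>y s\<bar> \<le> By"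
    and "m \<ge> 1" and "t \<ge> 1" and "lam > 0" and "0 < \<delta>" and "\<delta> < 1"
    \<comment> \<open>event E^f(t)\<close>
    and Ef: "\<forall>x\<in>Q. \<bar>\<mu> x - \<rho> * f x\<bar> \<le> \<nu> * \<sigma> x"
    \<comment> \<open>f_t ~ GP(mu_{t-1}, nu_t^2 sigma^2_{t-1}) given F_{t-1}: marginal laws\<close>
    and "prob_space M"
    and GP: "\<forall>x\<in>Q. \<nu> * \<sigma> x > 0 \<longrightarrow>
               distributed M lborel (\<lambda>\<omega>. ft \<omega> x) (normal_density (\<mu> x) (\<nu> * \<sigma> x))"
  shows "\<forall>x\<in>Q. \<nu> * \<sigma> x > 0 \<longrightarrow>
           measure M {\<omega>\<in>space M. ft \<omega> x > \<rho> * f x} \<ge> 1 / (4 * exp 1 * sqrt pi)"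
  using GP Ef normal_tail[OF \<open>prob_space M\<close>] by (metis abs_minus_commute)

end
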